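(* Let $\mathcal{G}$ be a MAG with vertices $[n]$ numbered in a topological order. For each $i$, let $\mathbb{L}_i$ consist of (a) the independence $i\perp[i-1]\setminus\mathrm{mb}(i,[i])\mid\mathrm{mb}(i,[i])$, and (b) for every head $H\neq\{i\}$ whose maximal element is $i$ and every $k\in H\setminus\{i\}$, the independence $i\perp (H\cup T)\setminus(H'\cup T'\cup\{k\})\mid (H'\cup T')\setminus\{i\}$, where $H\to^{\{k\}}H'$, $T=\mathrm{tail}(H)$ and $T'=\mathrm{tail}(H')$. Then the collection $\mathbb{L}=\bigcup_i\mathbb{L}_i$ is equivalent to the collection of independences given by the ordered local Markov property for $\mathcal{G}$ (each can be derived from the other using the semi-graphoid axioms).
   Context: A MAG is an acyclic directed mixed graph (directed and bidirected edges, no directed cycles) with $\mathrm{sib}(v)\cap\mathrm{an}(v)=\emptyset$ for all $v$ and in which every nonadjacent pair is m-separated by some set. $[i]=\{1,\dots,i\}$, with ancestors having smaller labels. $\mathcal{G}_W$ is the induced subgraph, $\mathrm{dis}_W(v)$ the district of $v$ in $\mathcal{G}_W$. A set $A$ is ancestral if $\mathrm{an}(A)=A$; for ancestral $A$ and $v\in A$ with no child in $A$, $\mathrm{mb}(v,A)=(\mathrm{pa}_{\mathcal{G}_A}(\mathrm{dis}_A(v))\cup\mathrm{dis}_A(v))\setminus\{v\}$. The ordered local Markov property is the collection $v\perp A\setminus(\mathrm{mb}(v,A)\cup\{v\})\mid\mathrm{mb}(v,A)$ over all ancestral $A$ and childless $v\in A$. $\mathrm{barren}_{\mathcal{G}'}(W)=\{w\in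 W:\mathrm{de}_{\mathcal{G}'}(w)\cap W=\{w\}\}$; a nonempty $H$ is a head if $\mathrm{barren}(H)=H$ and $H$ lies in one district of $\mathcal{G}_{\mathrm{an}(H)}$; $\mathrm{tail}(H)=(\mathrm{dis}_{\mathrm{an}(H)}(H)\setminus H)\cup\mathrm{pa}(\mathrm{dis}_{\mathrm{an}(H)}(H))$. For a head $H$ with maximal element $i$ and $\emptyset\ne K\subseteq H\setminus\{i\}$, $H\to^KH'$ means $H'=\mathrm{barren}_{\mathcal{G}'}(\mathrm{dis}_{\mathcal{G}'}(i))$ with $\mathcal{G}'=\mathcal{G}_{\mathrm{an}(H)\setminus K}$. Semi-graphoid axioms: symmetry $X\perp Y|Z\iff Y\perp X|Z$; decomposition $X\perp YW|Z\Rightarrow X\perp Y|Z$; weak union $X\perp YW|Z\Rightarrow X\perp W|YZ$; contraction $X\perp Y|Z\ \&\ X\perp W|YZ\Rightarrow X\perp YW|Z$. *)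

theory Defs
  imports Main
begin

(* Mixed graphs on a vertex set V: D a b means a directed edge a -> b,
   B a b means a bidirected edge a <-> b. *)

definition dedge :: "'a set \<Rightarrow> ('a \<Rightarrow> 'a \<Rightarrow> bool) \<Rightarrow> ('a \<times> 'a) set" where
  "dedge W D = {(x, y). x \<in> W \<and> y \<in> W \<and> D x y}"

definition bedge :: "'a set \<Rightarrow> ('a \<Rightarrow> 'a \<Rightarrow> bool) \<Rightarrow> ('a \<times> 'a) set" where
  "bedge W B = {(x, y). x \<in> W \<and> y \<in> W \<and> B x y}"

definition anc :: "'a set \<Rightarrow> ('a \<Rightarrow> 'a \<Rightarrow> bool) \<Rightarrow> 'a set \<Rightarrow> 'a set" where
  "anc W D S = {a \<in> W. \<exists>s \<in> S \<inter> W. (a, s) \<in> (dedge W D)\<^sup>*}"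

definition desc :: "'a set \<Rightarrow> ('a \<Rightarrow> 'a \<Rightarrow> bool) \<Rightarrow> 'a set \<Rightarrow> 'a set" where
  "desc W D S = {d \<in> W. \<exists>s \<in> S \<inter> W. (s, d) \<in> (dedge W D)\<^sup>*}"

definition pa_in :: "'a set \<Rightarrow> ('a \<Rightarrow> 'a \<Rightarrow> bool) \<Rightarrow> 'a set \<Rightarrow> 'a set" where
  "pa_in W D S = {p \<in> W. \<exists>s \<in> S. D p s}"

definition sib :: "'a set \<Rightarrow> ('a \<Rightarrow> 'a \<Rightarrow> bool) \<Rightarrow> 'a \<Rightarrow> 'a set" where
  "sib V B v = {w \<in> V. B v w}"

definition dis :: "'a set \<Rightarrow> ('a \<Rightarrow> 'a \<Rightarrow> bool) \<Rightarrow> 'a \<Rightarrow> 'a set" where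
  "dis W B v = {w \<in> W. v \<in> W \<and> (v, w) \<in> (bedge W B)\<^sup>*}"

definition disS :: "'a set \<Rightarrow> ('a \<Rightarrow> 'a \<Rightarrow> bool) \<Rightarrow> 'a set \<Rightarrow> 'a set" where
  "disS W B S = (\<Union>h \<in> S. dis W B h)"

definition mixed_graph :: "'a set \<Rightarrow> ('a \<Rightarrow> 'a \<Rightarrow> bool) \<Rightarrow> ('a \<Rightarrow> 'a \<Rightarrow> bool) \<Rightarrow> bool" where
  "mixed_graph V D B \<longleftrightarrow>
     (\<forall>a b. D a b \<longrightarrow> a \<in> V \<and> b \<in> V \<and> a \<noteq> b) \<and>
     (\<forall>a b. B a b \<longrightarrow> a \<in> V \<and> b \<in> V \<and> a \<noteq> b \<and> B b a)"

definition adj :: "('a \<Rightarrow> 'a \<Rightarrow> bool) \<Rightarrow> ('a \<Rightarrow> 'a \<Rightarrow> bool) \<Rightarrow> 'a \<Rightarrow> 'a \<Rightarrow> bool" where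
  "adj D B a b \<longleftrightarrow> D a b \<or> D b a \<or> B a b"

definition head_at :: "('a \<Rightarrow> 'a \<Rightarrow> bool) \<Rightarrow> ('a \<Rightarrow> 'a \<Rightarrow> bool) \<Rightarrow> 'a \<Rightarrow> 'a \<Rightarrow> bool" where
  "head_at D B u v \<longleftrightarrow> D u v \<or> B u v"

definition collider :: "('a \<Rightarrow> 'a \<Rightarrow> bool) \<Rightarrow> ('a \<Rightarrow> 'a \<Rightarrow> bool) \<Rightarrow> 'a list \<Rightarrow> nat \<Rightarrow> bool" where
  "collider D B p j \<longleftrightarrow> head_at D B (p ! (j - 1)) (p ! j) \<and> head_at D B (p ! (j + 1)) (p ! j)"

definition m_connecting ::
  "'a set \<Rightarrow> ('a \<Rightarrow> 'a \<Rightarrow> bool) \<Rightarrow> ('a \<Rightarrow> 'a \<Rightarrow> bool) \<Rightarrow> 'a \<Rightarrow> 'a \<Rightarrow> 'a set \<Rightarrow> 'a list \<Rightarrow> bool" where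
  "m_connecting V D B a b Z p \<longleftrightarrow>
     p \<noteq> [] \<and> hd p = a \<and> last p = b \<and> distinct p \<and> set p \<subseteq> V \<and>
     (\<forall>j. j + 1 < length p \<longrightarrow> adj D B (p ! j) (p ! (j + 1))) \<and>
     (\<forall>j. 0 < j \<and> j + 1 < length p \<longrightarrow>
        (collider D B p j \<longrightarrow> p ! j \<in> anc V D Z) \<and>
        (\<not> collider D B p j \<longrightarrow> p ! j \<notin> Z))"

definition m_separated ::
  "'a set \<Rightarrow> ('a \<Rightarrow> 'a \<Rightarrow> bool) \<Rightarrow> ('a \<Rightarrow> 'a \<Rightarrow> bool) \<Rightarrow> 'a \<Rightarrow> 'a \<Rightarrow> 'a set \<Rightarrow> bool" where
  "m_separated V D B a b Z \<longleftrightarrow> a \<notin> Z \<and> b \<notin> Z \<and> \<not> (\<exists>p. m_connecting V D B a b Z p)"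

definition MAG :: "'a set \<Rightarrow> ('a \<Rightarrow> 'a \<Rightarrow> bool) \<Rightarrow> ('a \<Rightarrow> 'a \<Rightarrow> bool) \<Rightarrow> bool" where
  "MAG V D B \<longleftrightarrow>
     mixed_graph V D B \<and>
     acyclic (dedge V D) \<and>
     (\<forall>v \<in> V. sib V B v \<inter> anc V D {v} = {}) \<and>
     (\<forall>a \<in> V. \<forall>b \<in> V. a \<noteq> b \<and> \<not> adj D B a b \<longrightarrow>
        (\<exists>Z \<subseteq> V - {a, b}. m_separated V D B a b Z))"

definition ancestral_set :: "'a set \<Rightarrow> ('a \<Rightarrow> 'a \<Rightarrow> bool) \<Rightarrow> 'a set \<Rightarrow> bool" where
  "ancestral_set V D A \<longleftrightarrow> A \<subseteq> V \<and> anc V D A = A"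

definition childless :: "'a set \<Rightarrow> ('a \<Rightarrow> 'a \<Rightarrow> bool) \<Rightarrow> 'a \<Rightarrow> bool" where
  "childless A D v \<longleftrightarrow> \<not> (\<exists>c \<in> A. D v c)"

definition mb :: "('a \<Rightarrow> 'a \<Rightarrow> bool) \<Rightarrow> ('a \<Rightarrow> 'a \<Rightarrow> bool) \<Rightarrow> 'a \<Rightarrow> 'a set \<Rightarrow> 'a set" where
  "mb D B v A = (pa_in A D (dis A B v) \<union> dis A B v) - {v}"

(* independence statements X _||_ Y | Z are triples (X, Y, Z) *)
type_synonym 'a indep = "'a set \<times> 'a set \<times> 'a set"

definition ordered_local_markov ::
  "'a set \<Rightarrow> ('a \<Rightarrow> 'a \<Rightarrow> bool) \<Rightarrow> ('a \<Rightarrow> 'a \<Rightarrow> bool) \<Rightarrow> 'a indep set" where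
  "ordered_local_markov V D B =
     {({v}, A - (mb D B v A \<union> {v}), mb D B v A) | A v.
        ancestral_set V D A \<and> v \<in> A \<and> childless A D v}"

definition barren :: "'a set \<Rightarrow> ('a \<Rightarrow> 'a \<Rightarrow> bool) \<Rightarrow> 'a set \<Rightarrow> 'a set" where
  "barren W D S = {w \<in> S. desc W D {w} \<inter> S = {w}}"

definition is_head :: "'a set \<Rightarrow> ('a \<Rightarrow> 'a \<Rightarrow> bool) \<Rightarrow> ('a \<Rightarrow> 'a \<Rightarrow> bool) \<Rightarrow> 'a set \<Rightarrow> bool" where
  "is_head V D B H \<longleftrightarrow> H \<noteq> {} \<and> H \<subseteq> V \<and> barren V D H = H \<and>
     (\<forall>h \<in> H. \<forall>h' \<in> H. h' \<in> dis (anc V D H) B h)"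

definition tail :: "'a set \<Rightarrow> ('a \<Rightarrow> 'a \<Rightarrow> bool) \<Rightarrow> ('a \<Rightarrow> 'a \<Rightarrow> bool) \<Rightarrow> 'a set \<Rightarrow> 'a set" where
  "tail V D B H = (let Dd = disS (anc V D H) B H in (Dd - H) \<union> pa_in V D Dd)"

(* H ->^K H' : H' = barren_{G'}(dis_{G'}(i)), G' = G_{an(H) \ K}, i = max H *)
definition head_step ::
  "'a::linorder set \<Rightarrow> ('a \<Rightarrow> 'a \<Rightarrow> bool) \<Rightarrow> ('a \<Rightarrow> 'a \<Rightarrow> bool) \<Rightarrow> 'a set \<Rightarrow> 'a set \<Rightarrow> 'a set" where
  "head_step V D B H K = (let W = anc V D H - K in barren W D (dis W B (Max H)))"

definition L_i :: "nat \<Rightarrow> (nat \<Rightarrow> nat \<Rightarrow> bool) \<Rightarrow> (nat \<Rightarrow> nat \<Rightarrow> bool) \<Rightarrow> nat \<Rightarrow> nat indep set" where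
  "L_i n D B i =
     {({i}, {1..i-1} - mb D B i {1..i}, mb D B i {1..i})} \<union>
     {({i}, (H \<union> T) - (H' \<union> T' \<union> {k}), (H' \<union> T') - {i}) | H k H' T T'.
        is_head {1..n} D B H \<and> Max H = i \<and> H \<noteq> {i} \<and> k \<in> H - {i} \<and>
        H' = head_step {1..n} D B H {k} \<and> T = tail {1..n} D B H \<and> T' = tail {1..n} D B H'}"

definition L_all :: "nat \<Rightarrow> (nat \<Rightarrow> nat \<Rightarrow> bool) \<Rightarrow> (nat \<Rightarrow> nat \<Rightarrow> bool) \<Rightarrow> nat indep set" where
  "L_all n D B = (\<Union>i \<in> {1..n}. L_i n D B i)"

inductive_set sg_closure :: "'a indep set \<Rightarrow> 'a indep set" for S where
  base: "t \<in> S \<Longrightarrow> t \<in> sg_closure S"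
| symmetry: "(X, Y, Z) \<in> sg_closure S \<Longrightarrow> (Y, X, Z) \<in> sg_closure S"
| decomposition: "(X, Y \<union> W, Z) \<in> sg_closure S \<Longrightarrow> (X, Y, Z) \<in> sg_closure S"
| weak_union: "(X, Y \<union> W, Z) \<in> sg_closure S \<Longrightarrow> (X, W, Y \<union> Z) \<in> sg_closure S"
| contraction: "(X, Y, Z) \<in> sg_closure S \<Longrightarrow> (X, W, Y \<union> Z) \<in> sg_closure S \<Longrightarrow>
                 (X, Y \<union> W, Z) \<in> sg_closure S"

end

theory Submission
  imports Defs
begin



lemma sg_sub: "(X,Y,Z) \<in> sg_closure S \<Longrightarrow> Y' \<subseteq> Y \<Longrightarrow> (X,Y',Z) \<in> sg_closure S"
  using sg_closure.decomposition[of X Y' Y Z S] by (simp add: Un_absorb1)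

lemma sg_wu: "(X,Y,Z) \<in> sg_closure S \<Longrightarrow> Y1 \<subseteq> Y \<Longrightarrow> Z' = Y1 \<union> Z \<Longrightarrow> Y' = Y - Y1 \<Longrightarrow> (X,Y',Z') \<in> sg_closure S"
  using sg_closure.weak_union[of X Y1 "Y - Y1" Z S] by (simp add: Un_absorb1 Un_Diff_cancel)

lemma sg_con: "(X,Y,Z) \<in> sg_closure S \<Longrightarrow> (X,W,Z') \<in> sg_closure S \<Longrightarrow> Z' = Y \<union> Z \<Longrightarrow> R = Y \<union> W \<Longrightarrow> (X,R,Z) \<in> sg_closure S"
  using sg_closure.contraction by blast

lemma sg_sym: "(X,Y,Z) \<in> sg_closure S \<Longrightarrow> (Y,X,Z) \<in> sg_closure S"
  using sg_closure.symmetry by blast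

locale G =
  fixes n :: nat and D B :: "nat \<Rightarrow> nat \<Rightarrow> bool"
  assumes mg: "mixed_graph {1..n} D B"
    and incr: "\<forall>a b. D a b \<longrightarrow> a < b"
begin

abbreviation "V \<equiv> {1..n}"

definition closed :: "nat set \<Rightarrow> bool" where
  "closed S \<longleftrightarrow> (\<forall>a b. D a b \<longrightarrow> b \<in> S \<longrightarrow> a \<in> S)"

definition I :: "nat \<Rightarrow> nat set \<Rightarrow> nat indep" where
  "I v A = ({v}, A - (mb D B v A \<union> {v}), mb D B v A)"

lemma DV: "D a b \<Longrightarrow> a \<in> V \<and> b \<in> V" using mg unfolding mixed_graph_def by blast
lemma DL: "D a b \<Longrightarrow> a < b" using incr by blast
lemma BV: "B a b \<Longrightarrow> a \<in> V \<and> b \<in> V \<and> B b a" using mg unfolding mixed_graph_def by blast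

lemma tr_less: "(x,y) \<in> (dedge W D)\<^sup>+ \<Longrightarrow> x < y"
  by (induction rule: trancl_induct) (auto simp: dedge_def dest: DL)

lemma rt_le: "(x,y) \<in> (dedge W D)\<^sup>* \<Longrightarrow> x \<le> y"
  using tr_less by (metis less_imp_le order_refl rtrancl_eq_or_trancl)

lemma rt_first: "(x,y) \<in> (dedge W D)\<^sup>* \<Longrightarrow> x \<noteq> y \<Longrightarrow> \<exists>c\<in>W. D x c \<and> (c,y) \<in> (dedge W D)\<^sup>*"
  by (erule converse_rtranclE) (auto simp: dedge_def)

lemma rt_mono: "W \<subseteq> W' \<Longrightarrow> (x,y) \<in> (dedge W D)\<^sup>* \<Longrightarrow> (x,y) \<in> (dedge W' D)\<^sup>*"
  by (erule rtrancl_mono[THEN subsetD, rotated]) (auto simp: dedge_def)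

lemma rt_closed: assumes "closed S" "d \<in> S" "(x,d) \<in> (dedge W D)\<^sup>*" shows "x \<in> S \<and> (x,d) \<in> (dedge S D)\<^sup>*"
  using assms(3)
proof (induction rule: converse_rtrancl_induct)
  case base then show ?case using assms by simp
next
  case (step y z)
  then have "z \<in> S" "(z,d) \<in> (dedge S D)\<^sup>*" by auto
  moreover have "D y z" using step(1) by (simp add: dedge_def)
  ultimately have "y \<in> S" using assms(1) unfolding closed_def by blast
  then have "(y,z) \<in> dedge S D" using \<open>D y z\<close> \<open>z \<in> S\<close> by (simp add: dedge_def)
  then show ?case using \<open>y \<in> S\<close> \<open>(z,d) \<in> (dedge S D)\<^sup>*\<close> by (meson converse_rtrancl_into_rtrancl)
qed

lemma anc_closed_eq: "S \<subseteq> V \<Longrightarrow> closed S \<Longrightarrow> anc V D S = S"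
  unfolding anc_def using rt_closed by (auto 0 3)

lemma anc_closed: "closed (anc V D X)"
  unfolding closed_def anc_def
proof (intro allI impI)
  fix a b assume "D a b" "b \<in> {a \<in> V. \<exists>s\<in>X \<inter> V. (a, s) \<in> (dedge V D)\<^sup>*}"
  then show "a \<in> {a \<in> V. \<exists>s\<in>X \<inter> V. (a, s) \<in> (dedge V D)\<^sup>*}"
    using DV[of a b] by (auto simp: dedge_def intro: converse_rtrancl_into_rtrancl)
qed

lemma anc_sub: "X \<subseteq> V \<Longrightarrow> X \<subseteq> anc V D X"
  unfolding anc_def by auto

lemma anc_mono: "X \<subseteq> Y \<Longrightarrow> anc V D X \<subseteq> anc V D Y"
  unfolding anc_def by blast

lemma anc_V: "anc V D X \<subseteq> V" unfolding anc_def by auto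

lemma ancestral_iff: "ancestral_set V D A \<longleftrightarrow> A \<subseteq> V \<and> closed A"
  unfolding ancestral_set_def using anc_closed_eq anc_closed by metis

lemma dis_sub: "dis W B m \<subseteq> W" unfolding dis_def by auto
lemma dis_self: "m \<in> W \<Longrightarrow> m \<in> dis W B m" unfolding dis_def by auto
lemma dis_mono: "W \<subseteq> W' \<Longrightarrow> dis W B m \<subseteq> dis W' B m"
  unfolding dis_def
proof safe
  fix x assume "W \<subseteq> W'" "x \<in> W" "m \<in> W" "(m,x) \<in> (bedge W B)\<^sup>*"
  moreover have "bedge W B \<subseteq> bedge W' B" using \<open>W \<subseteq> W'\<close> by (auto simp: bedge_def)
  ultimately show "(m,x) \<in> (bedge W' B)\<^sup>*" using rtrancl_mono by blast
qed auto

lemma bedge_sym: "sym (bedge W B)"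
  unfolding sym_def bedge_def using BV by auto

lemma dis_sym: "h \<in> dis W B m \<Longrightarrow> dis W B h = dis W B m"
proof -
  assume h: "h \<in> dis W B m"
  then have hm: "(m,h) \<in> (bedge W B)\<^sup>*" "m \<in> W" "h \<in> W" unfolding dis_def by auto
  then have "(h,m) \<in> (bedge W B)\<^sup>*" using sym_rtrancl[OF bedge_sym] unfolding sym_def by blast
  then show ?thesis using hm unfolding dis_def by (auto intro: rtrancl_trans)
qed

lemma dis_restrict: "dis S B m \<subseteq> W \<Longrightarrow> W \<subseteq> S \<Longrightarrow> m \<in> W \<Longrightarrow> dis W B m = dis S B m"
proof
  assume a: "dis S B m \<subseteq> W" "W \<subseteq> S" "m \<in> W"
  show "dis W B m \<subseteq> dis S B m" using dis_mono a by blast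
  show "dis S B m \<subseteq> dis W B m"
  proof
    fix x assume x: "x \<in> dis S B m"
    then have "(m,x) \<in> (bedge S B)\<^sup>*" unfolding dis_def by auto
    then have "(m,x) \<in> (bedge W B)\<^sup>*" using x
    proof (induction rule: rtrancl_induct)
      case base then show ?case by simp
    next
      case (step y z)
      have "y \<in> dis S B m" using step(1,2) a unfolding dis_def bedge_def by auto
      then have "y \<in> W" using a by auto
      moreover have "z \<in> W" using step(4) a by auto
      ultimately have "(y,z) \<in> bedge W B" using step(2) by (auto simp: bedge_def)
      moreover have "(m,y) \<in> (bedge W B)\<^sup>*" using step(3) \<open>y \<in> dis S B m\<close> by blast
      ultimately show ?case by simp
    qed
    then show "x \<in> dis W B m" using x a unfolding dis_def by auto
  qed
qed

lemma barren_exists: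
  assumes "finite X" "d \<in> X" "X \<subseteq> W"
  shows "\<exists>h \<in> barren W D X. (d,h) \<in> (dedge W D)\<^sup>*"
proof -
  define C where "C = {x \<in> X. (d,x) \<in> (dedge W D)\<^sup>*}"
  have fC: "finite C" "d \<in> C" using assms unfolding C_def by auto
  define h where "h = Max C"
  have hC: "h \<in> C" using fC h_def by (metis Max_in empty_iff)
  have "desc W D {h} \<inter> X = {h}"
  proof
    show "{h} \<subseteq> desc W D {h} \<inter> X" using hC assms unfolding C_def desc_def by auto
    show "desc W D {h} \<inter> X \<subseteq> {h}"
    proof
      fix y assume y: "y \<in> desc W D {h} \<inter> X"
      then have "(h,y) \<in> (dedge W D)\<^sup>*" unfolding desc_def by auto
      then have "y \<in> C" "h \<le> y" using hC y rt_le unfolding C_def by (auto intro: rtrancl_trans)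
      then have "y \<le> h" using fC h_def by simp
      then show "y \<in> {h}" using \<open>h \<le> y\<close> by simp
    qed
  qed
  then show ?thesis using hC unfolding barren_def C_def by auto
qed

lemma pa_closed: "closed S \<Longrightarrow> Dd \<subseteq> S \<Longrightarrow> S \<subseteq> V \<Longrightarrow> pa_in S D Dd = pa_in V D Dd"
  unfolding pa_in_def closed_def by blast

end


context G begin

lemma G_lemma:
  assumes S: "S \<subseteq> V" "closed S" "m \<in> S"
  shows "is_head V D B (barren S D (dis S B m))"
    "barren S D (dis S B m) \<union> tail V D B (barren S D (dis S B m)) = mb D B m S \<union> {m}"
    "anc V D (barren S D (dis S B m)) \<subseteq> S"
    "dis S B m \<subseteq> anc V D (barren S D (dis S B m))"
    "(\<forall>c\<in>S. \<not> D m c) \<Longrightarrow> m \<in> barren S D (dis S B m)"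
proof -
  define Dm where "Dm = dis S B m"
  define H0 where "H0 = barren S D Dm"
  have DmS: "Dm \<subseteq> S" unfolding Dm_def by (rule dis_sub)
  have fin: "finite Dm" using finite_subset[OF order_trans[OF DmS S(1)]] by simp
  have mDm: "m \<in> Dm" unfolding Dm_def using S(3) by (rule dis_self)
  have H0Dm: "H0 \<subseteq> Dm" unfolding H0_def barren_def by auto
  have H0V: "H0 \<subseteq> V" using H0Dm DmS S(1) by blast
  have ancS: "anc V D H0 \<subseteq> S" using anc_mono[of H0 S] anc_closed_eq[OF S(1,2)] H0Dm DmS by blast
  have DmA: "Dm \<subseteq> anc V D H0"
  proof
    fix d assume d: "d \<in> Dm"
    obtain h where h: "h \<in> H0" "(d,h) \<in> (dedge S D)\<^sup>*"
      using barren_exists[OF fin d DmS] unfolding H0_def by blast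
    have "(d,h) \<in> (dedge V D)\<^sup>*" using rt_mono[OF S(1) h(2)] .
    moreover have "d \<in> V" "h \<in> V" using d h(1) H0Dm DmS S(1) by blast+
    ultimately show "d \<in> anc V D H0" using h(1) unfolding anc_def by blast
  qed
  have ne: "H0 \<noteq> {}" using barren_exists[OF fin mDm DmS] unfolding H0_def by blast
  have disA: "dis (anc V D H0) B h = Dm" if "h \<in> Dm" for h
  proof -
    have "dis S B h = Dm" using dis_sym[of h S m] that unfolding Dm_def by simp
    moreover have "h \<in> anc V D H0" using that DmA by blast
    ultimately show ?thesis using dis_restrict[of S h "anc V D H0"] DmA ancS by simp
  qed
  have barrenV: "barren V D H0 = H0"
  proof -
    have "desc V D {h} \<inter> H0 = {h}" if h: "h \<in> H0" for h
    proof
      have "h \<in> V" using h H0V by blast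
      then show "{h} \<subseteq> desc V D {h} \<inter> H0" using h unfolding desc_def by auto
      show "desc V D {h} \<inter> H0 \<subseteq> {h}"
      proof
        fix d assume d: "d \<in> desc V D {h} \<inter> H0"
        then have "(h,d) \<in> (dedge V D)\<^sup>*" unfolding desc_def by auto
        moreover have "d \<in> S" using d H0Dm DmS by auto
        ultimately have "(h,d) \<in> (dedge S D)\<^sup>*" "h \<in> S" using rt_closed[OF S(2)] by blast+
        then have "d \<in> desc S D {h} \<inter> Dm" using d H0Dm DmS unfolding desc_def by auto
        moreover have "desc S D {h} \<inter> Dm = {h}" using h unfolding H0_def barren_def by auto
        ultimately show "d \<in> {h}" by blast
      qed
    qed
    then show ?thesis unfolding barren_def by auto
  qed
  show head: "is_head V D B (barren S D (dis S B m))"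
    unfolding is_head_def H0_def[symmetric] Dm_def[symmetric]
  proof (intro conjI ballI)
    show "H0 \<noteq> {}" by (rule ne)
    show "H0 \<subseteq> V" using H0Dm DmS S(1) by blast
    show "barren V D H0 = H0" by (rule barrenV)
    fix h h' assume "h \<in> H0" "h' \<in> H0"
    then show "h' \<in> dis (anc V D H0) B h" using disA[of h] H0Dm by blast
  qed
  have disS: "disS (anc V D H0) B H0 = Dm"
  proof -
    have "(\<Union>h\<in>H0. dis (anc V D H0) B h) = (\<Union>h\<in>H0. Dm)"
      using disA H0Dm by (intro SUP_cong) auto
    then show ?thesis unfolding disS_def using ne by simp
  qed
  have "H0 \<union> tail V D B H0 = Dm \<union> pa_in V D Dm"
    unfolding tail_def Let_def disS using H0Dm by auto
  also have "\<dots> = mb D B m S \<union> {m}"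
    unfolding mb_def Dm_def[symmetric] using pa_closed[OF S(2) DmS S(1)] mDm by auto
  finally show "barren S D (dis S B m) \<union> tail V D B (barren S D (dis S B m)) = mb D B m S \<union> {m}"
    unfolding H0_def Dm_def .
  show "anc V D (barren S D (dis S B m)) \<subseteq> S" using ancS unfolding H0_def Dm_def .
  show "dis S B m \<subseteq> anc V D (barren S D (dis S B m))" using DmA unfolding H0_def Dm_def .
  assume ch: "\<forall>c\<in>S. \<not> D m c"
  have "desc S D {m} \<inter> Dm = {m}"
  proof
    show "{m} \<subseteq> desc S D {m} \<inter> Dm" using mDm S(3) unfolding desc_def by auto
    show "desc S D {m} \<inter> Dm \<subseteq> {m}"
    proof
      fix d assume "d \<in> desc S D {m} \<inter> Dm"
      then have "(m,d) \<in> (dedge S D)\<^sup>*" unfolding desc_def by auto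
      show "d \<in> {m}"
      proof (rule ccontr)
        assume "d \<notin> {m}"
        then obtain c where "c \<in> S" "D m c" using rt_first[OF \<open>(m,d) \<in> (dedge S D)\<^sup>*\<close>] by auto
        with ch show False by blast
      qed
    qed
  qed
  then show "m \<in> barren S D (dis S B m)" using mDm unfolding barren_def Dm_def by auto
qed

end


context G begin

lemma closed_remove: "closed S \<Longrightarrow> \<forall>c\<in>S. \<not> D u c \<Longrightarrow> closed (S - {u})"
  unfolding closed_def by blast

lemma mb_sub: "mb D B v A \<subseteq> A" unfolding mb_def pa_in_def using dis_sub by blast

lemma head_in_olmp:
  assumes H: "is_head V D B H" and i: "Max H = i" and k: "k \<in> H - {i}"
  shows "({i}, (H \<union> tail V D B H) - (head_step V D B H {k} \<union> tail V D B (head_step V D B H {k}) \<union> {k}),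
           (head_step V D B H {k} \<union> tail V D B (head_step V D B H {k})) - {i})
         \<in> sg_closure (ordered_local_markov V D B)"
proof -
  define A0 where "A0 = anc V D H"
  have HV: "H \<subseteq> V" "H \<noteq> {}" and bar: "barren V D H = H"
    and hd: "\<forall>h\<in>H. \<forall>h'\<in>H. h' \<in> dis A0 B h" using H unfolding is_head_def A0_def by auto
  have HA0: "H \<subseteq> A0" unfolding A0_def using anc_sub[OF HV(1)] .
  have finH: "finite H" using finite_subset[OF HV(1)] by simp
  have iH: "i \<in> H" using i Max_in[OF finH HV(2)] by simp
  define Dd where "Dd = dis A0 B i"
  have hDd: "dis A0 B h = Dd" if "h \<in> H" for h
    using dis_sym[of h A0 i] hd iH that unfolding Dd_def by blast
  have disSeq: "disS A0 B H = Dd" unfolding disS_def using hDd HV(2) by auto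
  have A0V: "A0 \<subseteq> V" unfolding A0_def by (rule anc_V)
  have A0c: "closed A0" unfolding A0_def by (rule anc_closed)
  have DdA0: "Dd \<subseteq> A0" unfolding Dd_def by (rule dis_sub)
  have HT: "H \<union> tail V D B H \<subseteq> A0"
    unfolding tail_def Let_def A0_def[symmetric] disSeq
    using HA0 DdA0 pa_closed[OF A0c DdA0 A0V] unfolding pa_in_def by blast
  have key: "False" if hc: "h \<in> H" "c \<in> A0" "D h c" for h c
  proof -
    obtain s where s: "s \<in> H" "(c,s) \<in> (dedge V D)\<^sup>*" using hc(2) unfolding A0_def anc_def by auto
    have "(h,c) \<in> dedge V D" using hc(3) DV[OF hc(3)] unfolding dedge_def by auto
    then have hs: "(h,s) \<in> (dedge V D)\<^sup>*" using s(2) by (meson converse_rtrancl_into_rtrancl)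
    have "h \<in> V" "s \<in> V" using hc(1) s(1) HV(1) by blast+
    then have "s \<in> desc V D {h} \<inter> H" using hs s(1) unfolding desc_def by auto
    moreover have "desc V D {h} \<inter> H = {h}" using hc(1) bar unfolding barren_def by blast
    ultimately have "s = h" by blast
    moreover have "c \<le> s" using rt_le[OF s(2)] .
    moreover have "h < c" using DL[OF hc(3)] .
    ultimately show False by simp
  qed
  define W where "W = A0 - {k}"
  have kH: "k \<in> H" "k \<noteq> i" using k by auto
  have Wc: "closed W" unfolding W_def
    using closed_remove[OF A0c] key[OF kH(1)] by blast
  have WV: "W \<subseteq> V" using A0V unfolding W_def by blast
  have iW: "i \<in> W" using iH HA0 kH(2) unfolding W_def by blast
  have ich: "childless W D i" unfolding childless_def W_def using key[OF iH] by blast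
  have "({i}, W - (mb D B i W \<union> {i}), mb D B i W) \<in> ordered_local_markov V D B"
    unfolding ordered_local_markov_def using ancestral_iff WV Wc iW ich by blast
  then have base: "({i}, W - (mb D B i W \<union> {i}), mb D B i W) \<in> sg_closure (ordered_local_markov V D B)"
    by (rule sg_closure.base)
  have hs: "head_step V D B H {k} = barren W D (dis W B i)"
    unfolding head_step_def Let_def i W_def A0_def ..
  have HT': "head_step V D B H {k} \<union> tail V D B (head_step V D B H {k}) = mb D B i W \<union> {i}"
    unfolding hs using G_lemma(2)[OF WV Wc iW] .
  have ni: "i \<notin> mb D B i W" unfolding mb_def by blast
  have zz: "mb D B i W \<union> {i} - {i} = mb D B i W" using ni by auto
  show ?thesis unfolding HT' zz
    apply (rule sg_sub[OF base])
    using ni HT unfolding W_def by auto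
qed

end


context G begin

lemma mb_mem: "x \<in> mb D B v A \<longleftrightarrow> x \<noteq> v \<and> (x \<in> dis A B v \<or> (x \<in> A \<and> (\<exists>s\<in>dis A B v. D x s)))"
  unfolding mb_def pa_in_def by blast

lemma head_L:
  assumes Sp: "Sp \<subseteq> V" "closed Sp" "m \<in> Sp" "\<forall>x\<in>Sp. x \<le> m"
    and u: "u \<in> Sp" "u \<noteq> m" "\<forall>c\<in>Sp. \<not> D u c" "u \<in> dis Sp B m"
  shows "({m}, (mb D B m Sp \<union> {m}) - (mb D B m (Sp - {u}) \<union> {m} \<union> {u}), (mb D B m (Sp - {u}) \<union> {m}) - {m})
         \<in> L_all n D B"
proof -
  define H where "H = barren Sp D (dis Sp B m)"
  have mch: "\<forall>c\<in>Sp. \<not> D m c" using Sp(4) DL by fastforce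
  have isH: "is_head V D B H" unfolding H_def using G_lemma(1)[OF Sp(1-3)] .
  have HT: "H \<union> tail V D B H = mb D B m Sp \<union> {m}" unfolding H_def using G_lemma(2)[OF Sp(1-3)] .
  have ancH: "anc V D H \<subseteq> Sp" unfolding H_def using G_lemma(3)[OF Sp(1-3)] .
  have disH: "dis Sp B m \<subseteq> anc V D H" unfolding H_def using G_lemma(4)[OF Sp(1-3)] .
  have mH: "m \<in> H" unfolding H_def using G_lemma(5)[OF Sp(1-3) mch] .
  have "dis Sp B u = dis Sp B m" using dis_sym[OF u(4)] .
  then have uH: "u \<in> H" unfolding H_def using G_lemma(5)[OF Sp(1) Sp(2) u(1) u(3)] by simp
  have HV: "H \<subseteq> V" using isH unfolding is_head_def by blast
  have finH: "finite H" using finite_subset[OF HV] by simp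
  have HSp: "H \<subseteq> Sp" using anc_sub[OF HV] ancH by blast
  have maxH: "Max H = m" using Max_eqI[OF finH _ mH] Sp(4) HSp by blast
  define W where "W = anc V D H - {u}"
  define S where "S = Sp - {u}"
  have Wc: "closed W" unfolding W_def
    using closed_remove[OF anc_closed] u(3) ancH by blast
  have WV: "W \<subseteq> V" unfolding W_def using anc_V by blast
  have mW: "m \<in> W" unfolding W_def using mH anc_sub[OF HV] u(2) by blast
  have Sc: "closed S" unfolding S_def using closed_remove[OF Sp(2) u(3)] .
  have SV: "S \<subseteq> V" unfolding S_def using Sp(1) by blast
  have WS: "W \<subseteq> S" unfolding W_def S_def using ancH by blast
  have dSW: "dis S B m \<subseteq> W"
    using dis_mono[of S Sp m] disH dis_sub[of S m] unfolding S_def W_def by blast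
  have dWS: "dis W B m = dis S B m" using dis_restrict[OF dSW WS mW] .
  have paeq: "pa_in W D (dis W B m) = pa_in S D (dis S B m)"
    using pa_closed[OF Wc dis_sub[of W m] WV, unfolded dWS] pa_closed[OF Sc dis_sub[of S m] SV] dWS by simp
  have mbeq: "mb D B m W = mb D B m S" unfolding mb_def using dWS paeq by simp
  have hs: "head_step V D B H {u} = barren W D (dis W B m)"
    unfolding head_step_def Let_def maxH W_def ..
  have HT': "head_step V D B H {u} \<union> tail V D B (head_step V D B H {u}) = mb D B m S \<union> {m}"
    unfolding hs mbeq[symmetric] using G_lemma(2)[OF WV Wc mW] .
  have mn: "m \<in> {1..n}" using Sp(1,3) by blast
  have "({m}, (H \<union> tail V D B H) - (head_step V D B H {u} \<union> tail V D B (head_step V D B H {u}) \<union> {u}),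
         (head_step V D B H {u} \<union> tail V D B (head_step V D B H {u})) - {m}) \<in> L_i n D B m"
    unfolding L_i_def using isH maxH uH u(2) by blast
  then show ?thesis unfolding HT HT' S_def L_all_def using mn by blast
qed

lemma R1:
  assumes Sp: "Sp \<subseteq> V" "closed Sp" "m \<in> Sp" "\<forall>x\<in>Sp. x \<le> m"
    and u: "u \<in> Sp" "u \<noteq> m" "\<forall>c\<in>Sp. \<not> D u c"
    and h1: "I m Sp \<in> sg_closure (L_all n D B)"
    and h2: "I u (Sp - {m}) \<in> sg_closure (L_all n D B)"
  shows "I m (Sp - {u}) \<in> sg_closure (L_all n D B)"
proof -
  define S where "S = Sp - {u}"
  have Sc: "closed S" unfolding S_def using closed_remove[OF Sp(2) u(3)] .
  have SV: "S \<subseteq> V" unfolding S_def using Sp(1) by blast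
  define P where "P = mb D B m Sp"
  define P' where "P' = mb D B m S"
  have PSp: "P \<subseteq> Sp" unfolding P_def by (rule mb_sub)
  have P'S: "P' \<subseteq> S" unfolding P'_def by (rule mb_sub)
  have mP: "m \<notin> P" "m \<notin> P'" unfolding P_def P'_def mb_def by auto
  show ?thesis
  proof (cases "u \<in> dis Sp B m")
    case False
    have "dis Sp B m \<subseteq> S" using False dis_sub unfolding S_def by blast
    then have dd: "dis S B m = dis Sp B m" using dis_restrict[of Sp m S] Sp(3) u(2) unfolding S_def by blast
    have "pa_in S D (dis S B m) = pa_in Sp D (dis Sp B m)"
      using pa_closed[OF Sc dis_sub[of S m] SV, unfolded dd] pa_closed[OF Sp(2) dis_sub[of Sp m] Sp(1)] dd by simp
    then have "P' = P" unfolding P_def P'_def mb_def using dd by simp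
    moreover have "S - (P \<union> {m}) \<subseteq> Sp - (P \<union> {m})" unfolding S_def by blast
    ultimately show ?thesis using sg_sub[OF h1[unfolded I_def P_def[symmetric]]]
      unfolding I_def P'_def[symmetric] S_def[symmetric] by simp
  next
    case True
    have uP: "u \<in> P" unfolding P_def mb_mem using True u(2) by blast
    have dSS: "dis S B m \<subseteq> dis Sp B m" using dis_mono[of S Sp m] unfolding S_def by blast
    have P'P: "P' \<subseteq> P" unfolding P'_def P_def mb_def pa_in_def
      using dSS unfolding S_def by blast
    have uP': "u \<notin> P'" using P'S unfolding S_def by blast
    define Q where "Q = mb D B u (Sp - {m})"
    have dQ: "dis (Sp - {m}) B u \<subseteq> dis Sp B m"
      using dis_mono[of "Sp - {m}" Sp u] dis_sym[OF True] by blast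
    have QP: "Q \<subseteq> P - {u}"
    proof
      fix x assume "x \<in> Q"
      then have "x \<noteq> u" "x \<in> Sp - {m}" "x \<in> dis (Sp - {m}) B u \<or> (\<exists>s\<in>dis (Sp - {m}) B u. D x s)"
        unfolding Q_def mb_mem using mb_sub[of u "Sp - {m}"] \<open>x \<in> Q\<close> unfolding Q_def by blast+
      then show "x \<in> P - {u}" unfolding Diff_iff P_def mb_mem using dQ by blast
    qed
    define Y2 where "Y2 = Sp - (P \<union> {m})"
    define Y1 where "Y1 = P - P' - {u}"
    define Yb where "Yb = (Sp - {m}) - (Q \<union> {u})"
    have h2': "({u}, Yb, Q) \<in> sg_closure (L_all n D B)" using h2 unfolding I_def Yb_def Q_def .
    have s1: "({u}, Y2, P - {u}) \<in> sg_closure (L_all n D B)"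
      apply (rule sg_wu[OF h2', of "Yb - Y2"])
      using QP uP PSp mP unfolding Yb_def Y2_def by auto
    have s2: "(Y2, {m}, P) \<in> sg_closure (L_all n D B)"
      using sg_sym[OF h1[unfolded I_def P_def[symmetric]]] unfolding Y2_def .
    have s3: "(Y2, {u} \<union> {m}, P - {u}) \<in> sg_closure (L_all n D B)"
      apply (rule sg_con[OF sg_sym[OF s1] s2]) using uP by auto
    have s4: "({m}, Y2, P - {u}) \<in> sg_closure (L_all n D B)"
      using sg_sym[OF sg_sub[OF s3, of "{m}"]] by blast
    have hl: "({m}, Y1, P') \<in> sg_closure (L_all n D B)"
    proof -
      have "({m}, (P \<union> {m}) - (P' \<union> {m} \<union> {u}), (P' \<union> {m}) - {m}) \<in> L_all n D B"
        using head_L[OF Sp u True] unfolding P_def P'_def S_def .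
      moreover have "(P \<union> {m}) - (P' \<union> {m} \<union> {u}) = Y1" "(P' \<union> {m}) - {m} = P'"
        using mP unfolding Y1_def by auto
      ultimately show ?thesis by (simp add: sg_closure.base)
    qed
    have "({m}, Y1 \<union> Y2, P') \<in> sg_closure (L_all n D B)"
      apply (rule sg_con[OF hl s4]) using P'P uP uP' unfolding Y1_def by auto
    moreover have "Y1 \<union> Y2 = S - (P' \<union> {m})"
      using P'P uP uP' PSp mP unfolding Y1_def Y2_def S_def by auto
    ultimately show ?thesis unfolding I_def P'_def[symmetric] S_def[symmetric] by simp
  qed
qed

lemma R2:
  assumes A: "A \<subseteq> V" "closed A" "m \<in> A" "\<forall>x\<in>A. x \<le> m"
    and v: "v \<in> A" "v \<noteq> m" "\<forall>c\<in>A. \<not> D v c"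
    and h1: "I v (A - {m}) \<in> sg_closure (L_all n D B)"
    and h2: "I m A \<in> sg_closure (L_all n D B)"
  shows "I v A \<in> sg_closure (L_all n D B)"
proof -
  have mch: "\<forall>c\<in>A. \<not> D m c" using A(4) DL by fastforce
  define Am where "Am = A - {m}"
  have Amc: "closed Am" unfolding Am_def using closed_remove[OF A(2) mch] .
  have AmV: "Am \<subseteq> V" unfolding Am_def using A(1) by blast
  define P where "P = mb D B v A"
  define Pm where "Pm = mb D B m A"
  define Q where "Q = mb D B v Am"
  have PA: "P \<subseteq> A" unfolding P_def by (rule mb_sub)
  have PmA: "Pm \<subseteq> A" unfolding Pm_def by (rule mb_sub)
  have QAm: "Q \<subseteq> Am" unfolding Q_def by (rule mb_sub)
  have vP: "v \<notin> P" "m \<notin> Pm" "v \<notin> Q" unfolding P_def Pm_def Q_def mb_def by auto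
  show ?thesis
  proof (cases "m \<in> dis A B v")
    case False
    have "dis A B v \<subseteq> Am" using False dis_sub unfolding Am_def by blast
    then have dd: "dis Am B v = dis A B v" using dis_restrict[of A v Am] v(1,2) unfolding Am_def by blast
    have "pa_in Am D (dis Am B v) = pa_in A D (dis A B v)"
      using pa_closed[OF Amc dis_sub[of Am v] AmV, unfolded dd] pa_closed[OF A(2) dis_sub[of A v] A(1)] dd by simp
    then have QP: "Q = P" unfolding P_def Q_def mb_def using dd by simp
    have mP: "m \<notin> P" unfolding P_def mb_mem using False mch dis_sub[of A v] by blast
    have vPm: "v \<notin> Pm"
    proof
      assume "v \<in> Pm"
      then have "v \<in> dis A B m \<or> (\<exists>s\<in>dis A B m. D v s)" unfolding Pm_def mb_mem by blast
      then show False
      proof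
        assume "v \<in> dis A B m"
        then have "dis A B v = dis A B m" by (rule dis_sym)
        then show False using False dis_self[OF A(3)] by simp
      next
        assume "\<exists>s\<in>dis A B m. D v s"
        then show False using v(3) dis_sub[of A m] by blast
      qed
    qed
    have s1: "({m}, {v}, A - {m, v}) \<in> sg_closure (L_all n D B)"
      apply (rule sg_wu[OF h2[unfolded I_def Pm_def[symmetric]], of "A - (Pm \<union> {m}) - {v}"])
      using vPm PmA vP v(1,2) by auto
    have "({v}, Am - (P \<union> {v}) \<union> {m}, P) \<in> sg_closure (L_all n D B)"
      apply (rule sg_con[OF h1[unfolded I_def Am_def[symmetric] Q_def[symmetric] QP] sg_sym[OF s1]])
      using PA mP vP unfolding Am_def by auto
    moreover have "Am - (P \<union> {v}) \<union> {m} = A - (P \<union> {v})" using mP A(3) v(2) unfolding Am_def by auto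
    ultimately show ?thesis unfolding I_def P_def by simp
  next
    case True
    have mP: "m \<in> P" unfolding P_def mb_mem using True v(2) by blast
    have dd: "dis A B m = dis A B v" using dis_sym[OF True] .
    have PPm: "P \<union> {v} = Pm \<union> {m}"
      unfolding P_def Pm_def mb_def dd using dis_self[OF v(1)] dis_self[OF A(3)] dd by auto
    have QP: "Q \<subseteq> P - {m}"
    proof
      fix x assume "x \<in> Q"
      then have "x \<noteq> v" "x \<in> Am" "x \<in> dis Am B v \<or> (\<exists>s\<in>dis Am B v. D x s)"
        unfolding Q_def mb_mem using QAm \<open>x \<in> Q\<close> by blast+
      then show "x \<in> P - {m}" unfolding Diff_iff P_def mb_mem using dis_mono[of Am A v] unfolding Am_def by blast
    qed
    define Y2 where "Y2 = A - (P \<union> {v})"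
    define Yb where "Yb = Am - (Q \<union> {v})"
    have s1: "({v}, Y2, P - {m}) \<in> sg_closure (L_all n D B)"
      apply (rule sg_wu[OF h1[unfolded I_def Am_def[symmetric] Q_def[symmetric]], of "Am - (Q \<union> {v}) - Y2"])
      using QP PA mP vP unfolding Y2_def Am_def by auto
    have s2: "(Y2, {m}, Pm) \<in> sg_closure (L_all n D B)"
      using sg_sym[OF h2[unfolded I_def Pm_def[symmetric]]] PPm unfolding Y2_def by simp
    have s3: "(Y2, {v} \<union> {m}, P - {m}) \<in> sg_closure (L_all n D B)"
      apply (rule sg_con[OF sg_sym[OF s1] s2]) using PPm mP vP by auto
    have s4: "(Y2, {v}, P) \<in> sg_closure (L_all n D B)"
      apply (rule sg_wu[OF s3, of "{m}"]) using mP v(2) by auto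
    show ?thesis using sg_sym[OF s4] unfolding I_def P_def[symmetric] Y2_def by simp
  qed
qed

end


context G begin

lemma I_base: "m \<in> V \<Longrightarrow> I m {1..m} \<in> sg_closure (L_all n D B)"
proof -
  assume mV: "m \<in> V"
  have "({m}, {1..m-1} - mb D B m {1..m}, mb D B m {1..m}) \<in> L_all n D B"
    unfolding L_all_def L_i_def using mV by blast
  moreover have "{1..m-1} - mb D B m {1..m} = {1..m} - (mb D B m {1..m} \<union> {m})"
    using mV by auto
  ultimately show ?thesis unfolding I_def by (simp add: sg_closure.base)
qed

lemma closed_prefix: "closed {1..m}"
  unfolding closed_def
proof (intro allI impI)
  fix a b assume "D a b" "b \<in> {1..m}"
  moreover have "a < b" "a \<in> V" using DL[OF \<open>D a b\<close>] DV[OF \<open>D a b\<close>] by auto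
  ultimately show "a \<in> {1..m}" by simp
qed

lemma main:
  "\<forall>A v. A \<subseteq> V \<longrightarrow> closed A \<longrightarrow> A \<subseteq> {1..m} \<longrightarrow> v \<in> A \<longrightarrow> (\<forall>c\<in>A. \<not> D v c)
     \<longrightarrow> I v A \<in> sg_closure (L_all n D B)"
proof (induction m rule: less_induct)
  case (less m)
  note outerIH = less.IH
  have inner: "I m S \<in> sg_closure (L_all n D B)"
    if "S \<subseteq> V" "closed S" "m \<in> S" "S \<subseteq> {1..m}" for S
    using that
  proof (induction S rule: measure_induct_rule[where f="\<lambda>S. card ({1..m} - S)"])
    case (less S)
    have mV: "m \<in> V" using less.prems by blast
    show ?case
    proof (cases "S = {1..m}")
      case True
      then show ?thesis using I_base[OF mV] by simp
    next
      case False
      define u where "u = Min ({1..m} - S)"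
      have ne: "{1..m} - S \<noteq> {}" using False less.prems(4) by blast
      have uin: "u \<in> {1..m} - S" unfolding u_def using Min_in[OF _ ne] by simp
      have umin: "\<And>x. x \<in> {1..m} - S \<Longrightarrow> u \<le> x" unfolding u_def by simp
      define Sp where "Sp = insert u S"
      have mn: "m \<le> n" using mV by simp
      have SpV: "Sp \<subseteq> V" unfolding Sp_def using less.prems(1) uin mn by auto
      have Spm: "Sp \<subseteq> {1..m}" unfolding Sp_def using less.prems(4) uin by blast
      have Spc: "closed Sp"
        unfolding closed_def
      proof (intro allI impI)
        fix a b assume ab: "D a b" "b \<in> Sp"
        show "a \<in> Sp"
        proof (cases "b = u")
          case True
          have "a < u" "1 \<le> a" using DL[OF ab(1)] DV[OF ab(1)] True by auto
          then have "a \<in> {1..m}" using uin by auto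
          then show ?thesis using umin[of a] \<open>a < u\<close> unfolding Sp_def by force
        next
          case False
          then have "b \<in> S" using ab(2) unfolding Sp_def by blast
          then show ?thesis using less.prems(2) ab(1) unfolding closed_def Sp_def by blast
        qed
      qed
      have uch: "\<forall>c\<in>Sp. \<not> D u c"
      proof
        fix c assume c: "c \<in> Sp"
        show "\<not> D u c"
        proof
          assume duc: "D u c"
          then have "c \<noteq> u" using DL by fastforce
          then have "c \<in> S" using c unfolding Sp_def by blast
          then have "u \<in> S" using less.prems(2) duc unfolding closed_def by blast
          then show False using uin by blast
        qed
      qed
      have mSp: "m \<in> Sp" unfolding Sp_def using less.prems(3) by blast
      have Spmax: "\<forall>x\<in>Sp. x \<le> m" using Spm by auto
      have um: "u \<noteq> m" using uin less.prems(3) by blast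
      have uSp: "u \<in> Sp" unfolding Sp_def by blast
      have "{1..m} - Sp \<subset> {1..m} - S" using uin unfolding Sp_def by blast
      then have "card ({1..m} - Sp) < card ({1..m} - S)"
        by (intro psubset_card_mono) simp_all
      then have h1: "I m Sp \<in> sg_closure (L_all n D B)"
        using less.IH[OF _ SpV Spc mSp Spm] by simp
      have mch: "\<forall>c\<in>Sp. \<not> D m c"
      proof (intro ballI notI)
        fix c assume "c \<in> Sp" "D m c"
        then show False using Spmax DL[of m c] by auto
      qed
      have h2: "I u (Sp - {m}) \<in> sg_closure (L_all n D B)"
      proof -
        have m1: "m - 1 < m" using mV by simp
        have "Sp - {m} \<subseteq> {1..m-1}" using Spm by auto
        moreover have "closed (Sp - {m})" using closed_remove[OF Spc mch] .
        moreover have "u \<in> Sp - {m}" using uSp um by blast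
        moreover have "\<forall>c\<in>Sp - {m}. \<not> D u c" using uch by blast
        moreover have "Sp - {m} \<subseteq> V" using SpV by blast
        ultimately show ?thesis using outerIH[OF m1, rule_format, of "Sp - {m}" u] SpV by blast
      qed
      have "I m (Sp - {u}) \<in> sg_closure (L_all n D B)"
        using R1[OF SpV Spc mSp Spmax uSp um uch h1 h2] .
      moreover have "Sp - {u} = S" unfolding Sp_def using uin by blast
      ultimately show ?thesis by simp
    qed
  qed
  show ?case
  proof (intro allI impI)
    fix A v assume A: "A \<subseteq> V" "closed A" "A \<subseteq> {1..m}" "v \<in> A" "\<forall>c\<in>A. \<not> D v c"
    have m1: "m - 1 < m" using A(3,4) by auto
    show "I v A \<in> sg_closure (L_all n D B)"
    proof (cases "m \<in> A")
      case False
      have "A \<subseteq> {1..m-1}"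
      proof
        fix x assume "x \<in> A"
        then have "x \<in> {1..m}" "x \<noteq> m" using A(3) False by auto
        then show "x \<in> {1..m-1}" by auto
      qed
      then show ?thesis using less.IH[OF m1, rule_format, of A v] A by blast
    next
      case True
      have Amax: "\<forall>x\<in>A. x \<le> m" using A(3) by auto
      have h2: "I m A \<in> sg_closure (L_all n D B)" using inner[OF A(1,2) True A(3)] .
      show ?thesis
      proof (cases "v = m")
        case True then show ?thesis using h2 by simp
      next
        case False
        have mch: "\<forall>c\<in>A. \<not> D m c"
        proof (intro ballI notI)
          fix c assume "c \<in> A" "D m c"
          then show False using Amax DL[of m c] by auto
        qed
        have "A - {m} \<subseteq> {1..m-1}" using A(3) by auto
        moreover have "closed (A - {m})" using closed_remove[OF A(2) mch] .
        ultimately have h1: "I v (A - {m}) \<in> sg_closure (L_all n D B)"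
          using less.IH[OF m1, rule_format, of "A - {m}" v] A False by blast
        show ?thesis using R2[OF A(1,2) True Amax A(4) False A(5) h1 h2] .
      qed
    qed
  qed
qed

end


context G begin

lemma dir2: "ordered_local_markov V D B \<subseteq> sg_closure (L_all n D B)"
proof
  fix t assume "t \<in> ordered_local_markov V D B"
  then obtain A v where t: "t = I v A" "ancestral_set V D A" "v \<in> A" "childless A D v"
    unfolding ordered_local_markov_def I_def by blast
  have "A \<subseteq> V" "closed A" using t(2) ancestral_iff by auto
  then show "t \<in> sg_closure (L_all n D B)"
    using main[of n] t unfolding childless_def by blast
qed

lemma dir1: "L_all n D B \<subseteq> sg_closure (ordered_local_markov V D B)"
proof
  fix t assume "t \<in> L_all n D B"
  then obtain i where i: "i \<in> V" "t \<in> L_i n D B i" unfolding L_all_def by blast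
  show "t \<in> sg_closure (ordered_local_markov V D B)"
  proof (cases "t = ({i}, {1..i-1} - mb D B i {1..i}, mb D B i {1..i})")
    case True
    have anc: "ancestral_set V D {1..i}" using ancestral_iff closed_prefix i(1) by auto
    have chl: "childless {1..i} D i" unfolding childless_def using DL by fastforce
    have ii: "i \<in> {1..i}" using i(1) by simp
    have "({i}, {1..i} - (mb D B i {1..i} \<union> {i}), mb D B i {1..i}) \<in> ordered_local_markov V D B"
      unfolding ordered_local_markov_def using anc chl ii by blast
    moreover have "{1..i-1} - mb D B i {1..i} = {1..i} - (mb D B i {1..i} \<union> {i})"
      using i(1) by auto
    ultimately show ?thesis using True by (simp add: sg_closure.base)
  next
    case False
    then obtain H k where Hk: "is_head V D B H" "Max H = i" "k \<in> H - {i}"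
      "t = ({i}, (H \<union> tail V D B H) - (head_step V D B H {k} \<union> tail V D B (head_step V D B H {k}) \<union> {k}),
           (head_step V D B H {k} \<union> tail V D B (head_step V D B H {k})) - {i})"
      using i(2) unfolding L_i_def by blast
    then show ?thesis using head_in_olmp by simp
  qed
qed

end

theorem theoremD6:
  fixes n :: nat and D B :: "nat \<Rightarrow> nat \<Rightarrow> bool"
  assumes "MAG {1..n} D B"
    and "\<forall>a b. D a b \<longrightarrow> a < b"
  shows "L_all n D B \<subseteq> sg_closure (ordered_local_markov {1..n} D B) \<and>
         ordered_local_markov {1..n} D B \<subseteq> sg_closure (L_all n D B)"
proof -
  interpret G n D B using assms unfolding MAG_def by unfold_locales auto
  show ?thesis using dir1 dir2 by blast
qed



end
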